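(* Fix $x\in\mathbb X$ and $\Lambda\Subset\mathbb X\setminus\{x\}$, a total order $\preceq$ on $\mathbf F(x)$, and a set $\mathbf E\subset\mathbf F(x)$ with $\mathbf E\supset\{X\in\mathbf F(x)\mid W(X)\neq1,\ X\setminus\{x\}\subset\Lambda\}$. Suppose that $Z(\Lambda)\neq0$ and, unless $z(x)W(x)=0$, assume also $Z_X(\Lambda)\neq0$ for all $X\in\mathbf E$. Then \[ \widehat z(x,\Lambda)=z(x)\prod_{X\in\mathbf F(x):\,X'\subset\Lambda}\big(1+(W(X)-1)R_X(X',\Lambda)\big). \]
   Context: $\mathbb X$ is a finite or countably infinite set, $X\Subset\mathbb X$ means finite subset, $\mathbf F$ is the set of finite subsets of $\mathbb X$. Fix $z:\mathbb X\to\mathbb C$, $W:\mathbf F\to\mathbb C$; $f^X=\prod_{y\in X}f(y)$, $W(x)=W(\{x\})$; singletons $\{x\}$ are written $x$ inside arguments. For an interaction $V:\mathbf F\to\mathbb C$, the conditional interaction is $V(X\mid B)=\prod_{C\subset B}V(X\cup C)$ if $X\cap B=\varnothing$, $V(X\mid B)=0$ if $X=\{y\}$ with $y\in B$, and $V(X\mid B)=1$ otherwise; the Boltzmann factor is $\kappa(X\mid B)=\prod_{\varnothing\neq S\subset X}V(S\mid B)$; partition functions are $Z(X,\Lambda\mid B)=\sum_{Y\subset\Lambda\setminus X}z^{X\cup Y}\kappa(X\cup Y\mid B)$, $Z(\Lambda\mid B)=Z(\varnothing,\Lambda\mid B)$, with $B$ omitted when $B=\varnothing$; correlations $R(X,\Lambda\mid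 B)=Z(X,\Lambda\mid B)/Z(\Lambda\mid B)$ when the denominator is nonzero, and effective activities $\widehat z(y,\Lambda\mid B)=R(\{y\},\Lambda\mid B)$ for $y\notin\Lambda$. Unadorned $\kappa,Z,R,\widehat z$ refer to $V=W$. Let $\mathbf F(x)=\{X\Subset\mathbb X\mid x\in X\}$ and $X'=X\setminus\{x\}$. Given the total order $\preceq$ on $\mathbf F(x)$ (strict part $\prec$) and $X\in\mathbf F(x)$, define $W_X:\mathbf F\to\mathbb C$ by $W_X(Y)=W(Y)W(\{x\}\cup Y)$ if $x\notin Y$ and $\{x\}\cup Y\prec X$; $W_X(Y)=1$ if $x\in Y$ and $Y\neq X$; $W_X(Y)=W(Y)$ otherwise. Quantities built from $V=W_X$ are written $\kappa_X,Z_X,R_X,\widehat z_X$. Convention: a product is set equal to $0$ if at least one factor is well defined and equals $0$, even if other factors are ill-defined. *)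

theory Defs
  imports Complex_Main "HOL-Library.Countable"
begin

text \<open>All quantities below are for empty boundary condition B = {} (the only case used),
  where the conditional interaction V(X|{}) is just V(X).\<close>

definition kappa :: "('a set \<Rightarrow> complex) \<Rightarrow> 'a set \<Rightarrow> complex" where
  "kappa V X = (\<Prod>S\<in>{S. S \<subseteq> X \<and> S \<noteq> {}}. V S)"

definition Zpart :: "('a \<Rightarrow> complex) \<Rightarrow> ('a set \<Rightarrow> complex) \<Rightarrow> 'a set \<Rightarrow> 'a set \<Rightarrow> complex" where
  "Zpart z V X Lam = (\<Sum>Y\<in>Pow (Lam - X). (\<Prod>y\<in>X \<union> Y. z y) * kappa V (X \<union> Y))"

definition Zfun :: "('a \<Rightarrow> complex) \<Rightarrow> ('a set \<Rightarrow> complex) \<Rightarrow> 'a set \<Rightarrow> complex" where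
  "Zfun z V Lam = Zpart z V {} Lam"

text \<open>Correlation R(X,Lambda) = Z(X,Lambda)/Z(Lambda). Since Z(emptyset,Lambda) = Z(Lambda)
  identically, R(emptyset,Lambda) = 1.\<close>
definition Rcorr :: "('a \<Rightarrow> complex) \<Rightarrow> ('a set \<Rightarrow> complex) \<Rightarrow> 'a set \<Rightarrow> 'a set \<Rightarrow> complex" where
  "Rcorr z V X Lam = (if X = {} then 1 else Zpart z V X Lam / Zfun z V Lam)"

definition zhat :: "('a \<Rightarrow> complex) \<Rightarrow> ('a set \<Rightarrow> complex) \<Rightarrow> 'a \<Rightarrow> 'a set \<Rightarrow> complex" where
  "zhat z V y Lam = Rcorr z V {y} Lam"

definition Fx :: "'a \<Rightarrow> 'a set set" where
  "Fx x = {X. finite X \<and> x \<in> X}"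

text \<open>Modified interaction W_X, for the order ord (a relation, (A,B) in ord meaning A precedes-or-equals B).\<close>
definition WX :: "('a set \<Rightarrow> complex) \<Rightarrow> 'a \<Rightarrow> ('a set \<times> 'a set) set \<Rightarrow> 'a set \<Rightarrow> 'a set \<Rightarrow> complex" where
  "WX W x ord X Y =
     (if x \<notin> Y \<and> (insert x Y, X) \<in> ord \<and> insert x Y \<noteq> X then W Y * W (insert x Y)
      else if x \<in> Y \<and> Y \<noteq> X then 1
      else W Y)"

end

theory Submission imports Defs begin

lemma kappa_insert:
  assumes "finite T" "x \<notin> T"
  shows "kappa V (insert x T) = kappa V T * (\<Prod>S\<in>Pow T. V (insert x S))"
proof -
  have eq: "{S. S \<subseteq> insert x T \<and> S \<noteq> {}} = {S. S \<subseteq> T \<and> S \<noteq> {}} \<union> insert x ` Pow T"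
  proof (intro equalityI subsetI)
    fix S assume "S \<in> {S. S \<subseteq> insert x T \<and> S \<noteq> {}}"
    then have S: "S \<subseteq> insert x T" "S \<noteq> {}" by auto
    show "S \<in> {S. S \<subseteq> T \<and> S \<noteq> {}} \<union> insert x ` Pow T"
    proof (cases "x \<in> S")
      case True
      then have "S = insert x (S - {x})" "S - {x} \<in> Pow T" using S by auto
      then show ?thesis by blast
    next
      case False then show ?thesis using S by auto
    qed
  qed auto
  have inj: "inj_on (insert x) (Pow T)" using assms(2) unfolding inj_on_def
    by (metis PowD insert_absorb insert_ident subset_iff)
  have d: "{S. S \<subseteq> T \<and> S \<noteq> {}} \<inter> insert x ` Pow T = {}" using assms(2) by auto
  have f1: "finite {S. S \<subseteq> T \<and> S \<noteq> {}}" using assms(1) by simp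
  show ?thesis unfolding kappa_def eq
    by (subst prod.union_disjoint[OF f1 _ d]) (use assms(1) in \<open>auto simp: prod.reindex[OF inj]\<close>)
qed

lemma kappa_WX:
  assumes "finite T" "x \<notin> T"
  shows "kappa (WX W x ord M) T = kappa W T *
     (\<Prod>S\<in>{S. S \<subseteq> T \<and> S \<noteq> {} \<and> (insert x S, M) \<in> ord \<and> insert x S \<noteq> M}. W (insert x S))"
proof -
  let ?A = "{S. S \<subseteq> T \<and> S \<noteq> {}}"
  have f: "finite ?A" using assms(1) by simp
  have "kappa (WX W x ord M) T = (\<Prod>S\<in>?A. W S * (if (insert x S, M) \<in> ord \<and> insert x S \<noteq> M then W (insert x S) else 1))"
    unfolding kappa_def
    by (rule prod.cong) (use assms(2) in \<open>auto simp: WX_def\<close>)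
  also have "\<dots> = kappa W T * (\<Prod>S\<in>?A. (if (insert x S, M) \<in> ord \<and> insert x S \<noteq> M then W (insert x S) else 1))"
    unfolding kappa_def prod.distrib ..
  also have "(\<Prod>S\<in>?A. (if (insert x S, M) \<in> ord \<and> insert x S \<noteq> M then W (insert x S) else 1))
      = (\<Prod>S\<in>?A \<inter> {S. (insert x S, M) \<in> ord \<and> insert x S \<noteq> M}. W (insert x S))"
    by (subst prod.inter_restrict[OF f]) simp
  finally show ?thesis by (simp add: Int_def conj_assoc)
qed

lemma Zpart_alt:
  assumes "finite Lam" "X \<subseteq> Lam"
  shows "Zpart z V X Lam = (\<Sum>Y\<in>{Y. Y \<subseteq> Lam \<and> X \<subseteq> Y}. (\<Prod>y\<in>Y. z y) * kappa V Y)"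
  unfolding Zpart_def
  by (rule sum.reindex_bij_witness[where i = "\<lambda>Y. Y - X" and j = "\<lambda>Y. X \<union> Y"]) (use assms in auto)

lemma Zfun_alt: "Zfun z V Lam = (\<Sum>Y\<in>Pow Lam. (\<Prod>y\<in>Y. z y) * kappa V Y)"
  unfolding Zfun_def Zpart_def by simp

lemma exists_max:
  assumes "finite A" "A \<noteq> {}" "A \<subseteq> D" "linear_order_on D r"
  shows "\<exists>M\<in>A. \<forall>X\<in>A. (X, M) \<in> r"
  using assms
proof (induction A rule: finite_ne_induct)
  case (singleton a)
  then show ?case using assms(4) unfolding linear_order_on_def partial_order_on_def preorder_on_def refl_on_def by auto
next
  case (insert a F)
  then obtain M where M: "M \<in> F" "\<forall>X\<in>F. (X, M) \<in> r" by auto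
  have tot: "total_on D r" "trans r" "refl_on D r" using assms(4) unfolding linear_order_on_def partial_order_on_def preorder_on_def by auto
  show ?case
  proof (cases "(a, M) \<in> r")
    case True then show ?thesis using M tot(3) insert.prems unfolding refl_on_def by auto
  next
    case False
    have "M \<in> D" using M(1) insert.prems by auto
    have "a \<in> D" using insert.prems by auto
    have "a \<noteq> M" using False \<open>M \<in> D\<close> tot(3) unfolding refl_on_def by auto
    then have "(M, a) \<in> r" using False tot(1) \<open>a \<in> D\<close> \<open>M \<in> D\<close> unfolding total_on_def by blast
    then show ?thesis using M tot(2) tot(3) insert.prems unfolding trans_def refl_on_def by blast
  qed
qed


lemma reindexR:
  assumes "Y \<subseteq> Lam" "x \<notin> Lam" "B \<subseteq> {X \<in> Fx x. X - {x} \<subseteq> Lam} - {{x}}"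
  shows "(\<Prod>X\<in>{X\<in>B. X - {x} \<subseteq> Y}. W X) = (\<Prod>S\<in>{S. S \<subseteq> Y \<and> S \<noteq> {} \<and> insert x S \<in> B}. W (insert x S))"
proof (rule prod.reindex_bij_witness[where i = "insert x" and j = "\<lambda>X. X - {x}"])
  fix X assume "X \<in> {X\<in>B. X - {x} \<subseteq> Y}"
  then have X: "X \<in> B" "X - {x} \<subseteq> Y" "x \<in> X" "X \<noteq> {x}" using assms(3) by (auto simp: Fx_def)
  show "insert x (X - {x}) = X" using X by auto
  show "X - {x} \<in> {S. S \<subseteq> Y \<and> S \<noteq> {} \<and> insert x S \<in> B}" using X by (auto simp: insert_absorb)
  show "W (insert x (X - {x})) = W X" using X by (simp add: insert_absorb)
next
  fix S assume "S \<in> {S. S \<subseteq> Y \<and> S \<noteq> {} \<and> insert x S \<in> B}"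
  then have S: "S \<subseteq> Y" "insert x S \<in> B" by auto
  have "x \<notin> S" using S(1) assms(1,2) by auto
  then show "insert x S - {x} = S" by auto
  show "insert x S \<in> {X\<in>B. X - {x} \<subseteq> Y}" using S by auto
qed

lemma Pow_prod:
  assumes "Y \<subseteq> Lam" "x \<notin> Lam" "finite Lam"
  shows "(\<Prod>S\<in>Pow Y. W (insert x S)) = W {x} * (\<Prod>X\<in>{X\<in>{X \<in> Fx x. X - {x} \<subseteq> Lam} - {{x}}. X - {x} \<subseteq> Y}. W X)"
proof -
  have fin: "finite Y" using assms finite_subset by auto
  have "Pow Y = insert {} (Pow Y - {{}})" by auto
  then have "(\<Prod>S\<in>Pow Y. W (insert x S)) = W {x} * (\<Prod>S\<in>Pow Y - {{}}. W (insert x S))"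
    by (metis (no_types, lifting) Diff_iff Pow_bottom fin finite_Pow_iff insertI1 prod.remove)
  also have "(\<Prod>S\<in>Pow Y - {{}}. W (insert x S)) = (\<Prod>S\<in>{S. S \<subseteq> Y \<and> S \<noteq> {} \<and> insert x S \<in> {X \<in> Fx x. X - {x} \<subseteq> Lam} - {{x}}}. W (insert x S))"
  proof (rule prod.cong)
    show "Pow Y - {{}} = {S. S \<subseteq> Y \<and> S \<noteq> {} \<and> insert x S \<in> {X \<in> Fx x. X - {x} \<subseteq> Lam} - {{x}}}"
    proof (intro equalityI subsetI)
      fix S assume "S \<in> Pow Y - {{}}"
      then have S: "S \<subseteq> Y" "S \<noteq> {}" by auto
      have "x \<notin> S" using S assms by auto
      then have "insert x S \<noteq> {x}" using S(2) by auto
      moreover have "finite S" using S(1) fin finite_subset by auto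
      ultimately show "S \<in> {S. S \<subseteq> Y \<and> S \<noteq> {} \<and> insert x S \<in> {X \<in> Fx x. X - {x} \<subseteq> Lam} - {{x}}}"
        using S assms(1) by (auto simp: Fx_def)
    qed auto
  qed simp
  finally show ?thesis using reindexR[OF assms(1,2), of "{X \<in> Fx x. X - {x} \<subseteq> Lam} - {{x}}" W] by simp
qed

theorem corollary4p3:
  fixes z :: "'a::countable \<Rightarrow> complex"
    and W :: "'a set \<Rightarrow> complex"
    and x :: 'a
    and Lam :: "'a set"
    and ord :: "('a set \<times> 'a set) set"
    and E :: "'a set set"
  assumes Lam_fin: "finite Lam"
    and x_notin: "x \<notin> Lam"
    and ord_dom: "ord \<subseteq> Fx x \<times> Fx x"
    and ord_lin: "linear_order_on (Fx x) ord"
    and E_sub: "E \<subseteq> Fx x"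
    and E_sup: "{X \<in> Fx x. W X \<noteq> 1 \<and> X - {x} \<subseteq> Lam} \<subseteq> E"
    and Z_nz: "Zfun z W Lam \<noteq> 0"
    and ZX_nz: "z x * W {x} \<noteq> 0 \<Longrightarrow> \<forall>X\<in>E. Zfun z (WX W x ord X) Lam \<noteq> 0"
  shows "zhat z W x Lam =
           z x * (\<Prod>X\<in>{X \<in> Fx x. X - {x} \<subseteq> Lam}.
                    1 + (W X - 1) * Rcorr z (WX W x ord X) (X - {x}) Lam)"
  proof -
  define FL where "FL = {X \<in> Fx x. X - {x} \<subseteq> Lam}"
  define F' where "F' = FL - {{x}}"
  define G where "G A = (\<Sum>Y\<in>Pow Lam. (\<Prod>y\<in>Y. z y) * kappa W Y * (\<Prod>X\<in>{X\<in>A. X - {x} \<subseteq> Y}. W X))" for A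
  define f where "f X = 1 + (W X - 1) * Rcorr z (WX W x ord X) (X - {x}) Lam" for X
  have FLsub: "FL \<subseteq> insert x ` Pow Lam"
  proof
    fix X assume "X \<in> FL"
    then have "X = insert x (X - {x})" "X - {x} \<in> Pow Lam" by (auto simp: FL_def Fx_def)
    then show "X \<in> insert x ` Pow Lam" by blast
  qed
  have finFL: "finite FL" using finite_subset[OF FLsub] Lam_fin by simp
  have xFL: "{x} \<in> FL" by (auto simp: FL_def Fx_def)
  have finF': "finite F'" using finFL by (simp add: F'_def)
  have rhs: "(\<Prod>X\<in>{X \<in> Fx x. X - {x} \<subseteq> Lam}. f X) = W {x} * prod f F'"
    unfolding FL_def[symmetric] F'_def using prod.remove[OF finFL xFL, of f]
    by (simp add: f_def Rcorr_def)
  have key1: "Zpart z W {x} Lam = z x * W {x} * G F'"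
  proof -
    have "Zpart z W {x} Lam = (\<Sum>Y\<in>Pow Lam. (\<Prod>y\<in>insert x Y. z y) * kappa W (insert x Y))"
      unfolding Zpart_def using x_notin by simp
    also have "\<dots> = (\<Sum>Y\<in>Pow Lam. z x * W {x} * ((\<Prod>y\<in>Y. z y) * kappa W Y * (\<Prod>X\<in>{X\<in>F'. X - {x} \<subseteq> Y}. W X)))"
    proof (rule sum.cong)
      fix Y assume Y: "Y \<in> Pow Lam"
      then have fY: "finite Y" and xY: "x \<notin> Y" using Lam_fin x_notin finite_subset by auto
      show "(\<Prod>y\<in>insert x Y. z y) * kappa W (insert x Y) = z x * W {x} * ((\<Prod>y\<in>Y. z y) * kappa W Y * (\<Prod>X\<in>{X\<in>F'. X - {x} \<subseteq> Y}. W X))"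
        using Pow_prod[of Y Lam x W] Y x_notin Lam_fin
        by (simp add: kappa_insert[OF fY xY] prod.insert[OF fY xY] F'_def FL_def)
    qed simp
    finally show ?thesis by (simp add: G_def sum_distrib_left)
  qed
  have ord_props: "refl_on (Fx x) ord" "antisym ord" "trans ord" "total_on (Fx x) ord"
    using ord_lin unfolding linear_order_on_def partial_order_on_def preorder_on_def by auto
  have main: "G A = Zfun z W Lam * prod f A"
    if nz: "z x * W {x} \<noteq> 0" and A: "finite A" "A \<subseteq> F'" "\<forall>X\<in>A. \<forall>X'\<in>F'. (X', X) \<in> ord \<longrightarrow> X' \<in> A" for A
    using A
  proof (induction A rule: finite_psubset_induct)
    case (psubset A)
    show ?case
    proof (cases "A = {}")
      case True then show ?thesis by (simp add: G_def Zfun_alt)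
    next
      case False
      have AF: "A \<subseteq> Fx x" using psubset.prems by (auto simp: F'_def FL_def)
      obtain M where M: "M \<in> A" "\<forall>X\<in>A. (X, M) \<in> ord"
        using exists_max[OF psubset.hyps(1) False AF ord_lin] by blast
      define B where "B = A - {M}"
      have BA: "B \<subset> A" using M by (auto simp: B_def)
      have BF: "B \<subseteq> F'" using psubset.prems BA by auto
      have Bdc: "\<forall>X\<in>B. \<forall>X'\<in>F'. (X', X) \<in> ord \<longrightarrow> X' \<in> B"
      proof (intro ballI impI)
        fix X X' assume X: "X \<in> B" "X' \<in> F'" "(X', X) \<in> ord"
        then have "X' \<in> A" using psubset.prems(2) B_def by auto
        moreover have "X' \<noteq> M"
        proof
          assume "X' = M"
          then have "X = M" using X M(2) ord_props(2) B_def unfolding antisym_def by auto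
          then show False using X(1) B_def by auto
        qed
        ultimately show "X' \<in> B" using B_def by auto
      qed
      have IH: "G B = Zfun z W Lam * prod f B" using psubset.IH[OF BA BF Bdc] .
      have MF': "M \<in> F'" using M psubset.prems by auto
      have B_eq: "B = {X \<in> F'. (X, M) \<in> ord \<and> X \<noteq> M}"
      proof (intro equalityI subsetI)
        fix X assume "X \<in> B" then show "X \<in> {X \<in> F'. (X, M) \<in> ord \<and> X \<noteq> M}" using M BF B_def by auto
      next
        fix X assume "X \<in> {X \<in> F'. (X, M) \<in> ord \<and> X \<noteq> M}"
        then show "X \<in> B" using psubset.prems(2) M(1) B_def by auto
      qed
      have Mx: "x \<in> M" "M \<noteq> {x}" "M - {x} \<subseteq> Lam" "finite M" using MF' by (auto simp: F'_def FL_def Fx_def)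
      have Mne: "M - {x} \<noteq> {}" using Mx by auto
      have kapB: "kappa W Y * (\<Prod>X\<in>{X\<in>B. X - {x} \<subseteq> Y}. W X) = kappa (WX W x ord M) Y" if Y: "Y \<in> Pow Lam" for Y
      proof -
        have fY: "finite Y" and xY: "x \<notin> Y" using Y Lam_fin x_notin finite_subset by auto
        have "(\<Prod>X\<in>{X\<in>B. X - {x} \<subseteq> Y}. W X) = (\<Prod>S\<in>{S. S \<subseteq> Y \<and> S \<noteq> {} \<and> insert x S \<in> B}. W (insert x S))"
          using reindexR[of Y Lam x B W] Y x_notin BF by (auto simp: F'_def FL_def)
        also have "{S. S \<subseteq> Y \<and> S \<noteq> {} \<and> insert x S \<in> B} = {S. S \<subseteq> Y \<and> S \<noteq> {} \<and> (insert x S, M) \<in> ord \<and> insert x S \<noteq> M}"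
        proof (intro equalityI subsetI)
          fix S assume "S \<in> {S. S \<subseteq> Y \<and> S \<noteq> {} \<and> (insert x S, M) \<in> ord \<and> insert x S \<noteq> M}"
          then have S: "S \<subseteq> Y" "S \<noteq> {}" "(insert x S, M) \<in> ord" "insert x S \<noteq> M" by auto
          have "x \<notin> S" using S xY by auto
          then have "insert x S \<in> F'" using S Y fY finite_subset by (auto simp: F'_def FL_def Fx_def)
          then show "S \<in> {S. S \<subseteq> Y \<and> S \<noteq> {} \<and> insert x S \<in> B}" using S B_eq by auto
        qed (auto simp: B_eq)
        finally show ?thesis using kappa_WX[OF fY xY, of W ord M] by simp
      qed
      have GA: "G A = G B + (W M - 1) * (\<Sum>Y\<in>{Y. Y \<subseteq> Lam \<and> M - {x} \<subseteq> Y}. (\<Prod>y\<in>Y. z y) * kappa W Y * (\<Prod>X\<in>{X\<in>B. X - {x} \<subseteq> Y}. W X))"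
      proof -
        have "G A = (\<Sum>Y\<in>Pow Lam. (\<Prod>y\<in>Y. z y) * kappa W Y * (\<Prod>X\<in>{X\<in>B. X - {x} \<subseteq> Y}. W X) +
            (W M - 1) * (if M - {x} \<subseteq> Y then (\<Prod>y\<in>Y. z y) * kappa W Y * (\<Prod>X\<in>{X\<in>B. X - {x} \<subseteq> Y}. W X) else 0))"
          unfolding G_def
        proof (rule sum.cong)
          fix Y assume "Y \<in> Pow Lam"
          have finB: "finite B" using BA psubset.hyps(1) finite_subset by auto
          have "{X\<in>A. X - {x} \<subseteq> Y} = (if M - {x} \<subseteq> Y then insert M {X\<in>B. X - {x} \<subseteq> Y} else {X\<in>B. X - {x} \<subseteq> Y})"
            using M(1) B_def by auto
          then show "(\<Prod>y\<in>Y. z y) * kappa W Y * (\<Prod>X\<in>{X\<in>A. X - {x} \<subseteq> Y}. W X) =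
            (\<Prod>y\<in>Y. z y) * kappa W Y * (\<Prod>X\<in>{X\<in>B. X - {x} \<subseteq> Y}. W X) +
            (W M - 1) * (if M - {x} \<subseteq> Y then (\<Prod>y\<in>Y. z y) * kappa W Y * (\<Prod>X\<in>{X\<in>B. X - {x} \<subseteq> Y}. W X) else 0)"
            using finB B_def by (simp add: algebra_simps)
        qed simp
        also have "\<dots> = G B + (W M - 1) * (\<Sum>Y\<in>Pow Lam. (if M - {x} \<subseteq> Y then (\<Prod>y\<in>Y. z y) * kappa W Y * (\<Prod>X\<in>{X\<in>B. X - {x} \<subseteq> Y}. W X) else 0))"
          by (simp add: sum.distrib sum_distrib_left G_def)
        also have "(\<Sum>Y\<in>Pow Lam. (if M - {x} \<subseteq> Y then (\<Prod>y\<in>Y. z y) * kappa W Y * (\<Prod>X\<in>{X\<in>B. X - {x} \<subseteq> Y}. W X) else 0))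
           = (\<Sum>Y\<in>{Y. Y \<subseteq> Lam \<and> M - {x} \<subseteq> Y}. (\<Prod>y\<in>Y. z y) * kappa W Y * (\<Prod>X\<in>{X\<in>B. X - {x} \<subseteq> Y}. W X))"
          by (subst sum.inter_filter[symmetric]) (use Lam_fin in \<open>auto intro!: sum.cong\<close>)
        finally show ?thesis .
      qed
      define ZM where "ZM = Zfun z (WX W x ord M) Lam"
      define PM where "PM = Zpart z (WX W x ord M) (M - {x}) Lam"
      have GB: "G B = ZM" unfolding G_def ZM_def Zfun_alt
        by (rule sum.cong) (auto simp: kapB mult.assoc[symmetric] simp del: Pow_iff)
      have PMe: "PM = (\<Sum>Y\<in>{Y. Y \<subseteq> Lam \<and> M - {x} \<subseteq> Y}. (\<Prod>y\<in>Y. z y) * kappa W Y * (\<Prod>X\<in>{X\<in>B. X - {x} \<subseteq> Y}. W X))"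
        unfolding PM_def Zpart_alt[OF Lam_fin Mx(3)]
        by (rule sum.cong) (auto simp: kapB mult.assoc[symmetric])
      have fM: "f M = 1 + (W M - 1) * (PM / ZM)" unfolding f_def Rcorr_def PM_def ZM_def using Mne by simp
      have pA: "prod f A = f M * prod f B" unfolding B_def using prod.remove[OF psubset.hyps(1) M(1)] .
      show ?thesis
      proof (cases "W M = 1")
        case True
        then show ?thesis using GA IH pA fM by simp
      next
        case False
        then have "M \<in> E" using E_sup MF' by (auto simp: F'_def FL_def)
        then have "ZM \<noteq> 0" using ZX_nz nz ZM_def by auto
        have e1: "G A = ZM + (W M - 1) * PM" using GA GB PMe by simp
        have e2: "ZM * f M = ZM + (W M - 1) * PM" using fM \<open>ZM \<noteq> 0\<close> by (simp add: field_simps)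
        have e3: "Zfun z W Lam * prod f A = ZM * f M" using pA IH GB by simp
        show ?thesis using e1 e2 e3 by simp
      qed
    qed
  qed
  have zh: "zhat z W x Lam = Zpart z W {x} Lam / Zfun z W Lam" by (simp add: zhat_def Rcorr_def)
  show ?thesis
  proof (cases "z x * W {x} = 0")
    case True
    then show ?thesis using zh key1 rhs unfolding f_def by auto
  next
    case False
    have "G F' = Zfun z W Lam * prod f F'" using main[OF False finF'] by auto
    then show ?thesis using zh key1 rhs Z_nz by (simp add: f_def)
  qed
qed

end
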